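(* Let $0<\epsilon<1$ and let $X^\epsilon$ be the solution of the initial value problem described in the context. Then there is a constant $C>0$ such that for every $\epsilon\in(0,1)$ and every $t\geq 0$, $$\int_{-\pi}^{+\pi}|X^\epsilon(x,t)|\,dx\leq \int_{-\pi}^{+\pi}|v_0^\epsilon(x)|\,dx\leq C.$$
   Context: Let $\mathcal{C}_b(\mathbb{R})$ denote the Banach space of bounded continuous real functions on $\mathbb{R}$ with the sup norm. For a real function $u$ set $u^+=\max(0,u)$, $u^-=\max(0,-u)$, so $u=u^+-u^-$, $|u|=u^++u^-$. For $0<\epsilon<1$ let $u^\epsilon:\mathbb{R}\times[0,\infty)\to\mathbb{R}$ be $2\pi$-periodic in $x$, with $t\mapsto u^\epsilon(\cdot,t)$ continuous from $[0,\infty)$ into $\mathcal{C}_b(\mathbb{R})$, and assume there is $M_1>0$ with $|u^\epsilon(x,t)|\leq M_1$ for all $\epsilon$, $x$, $t\geq0$. Let $v_0^\epsilon\in\mathcal{C}_b(\mathbb{R})$ be $2\pi$-periodic with $\sup_{\epsilon}\int_{-\pi}^{\pi}|v_0^\epsilon(x)|dx<\infty$. Let $X^\epsilon$ be the unique global $\mathcal{C}^1$ solution $t\mapsto X^\epsilon(\cdot,t)\in\mathcal{C}_b(\mathbb{R})$ of the linear ODE $$\frac{d}{dt}X^\epsilon(x,t)=\frac{1}{\epsilon}\big[X^\epsilon(x-\epsilon,t)u^{\epsilon+}(x-\epsilon,t)-X^\epsilon(x,t)|u^{\epsilon}(x,t)|+X^\epsilon(x+\epsilon,t)u^{\epsilon-}(x+\epsilon,t)\big],\quad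 X^\epsilon(x,0)=v_0^\epsilon(x).$$ *)

theory Defs
  imports "HOL-Analysis.Analysis"
begin

end

theory Submission
  imports Defs
begin

lemma bl_eval: "bounded_linear (\<lambda>g::real\<Rightarrow>\<^sub>Creal. apply_bcontfun g y)"
proof
  show "\<exists>K. \<forall>g::real\<Rightarrow>\<^sub>Creal. norm (apply_bcontfun g y) \<le> norm g * K"
    by (rule exI[of _ 1]) (metis mult.right_neutral norm_bounded)
qed simp_all

lemma eval_deriv:
  fixes f :: "real \<Rightarrow> (real \<Rightarrow>\<^sub>C real)"
  assumes "(f has_vector_derivative f') (at t within S)"
  shows "((\<lambda>s. apply_bcontfun (f s) y) has_real_derivative apply_bcontfun f' y) (at t within S)"
  using bounded_linear.has_vector_derivative[OF bl_eval assms]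
  by (simp add: has_real_derivative_iff_has_vector_derivative)

lemma abs_eval_le: "\<bar>apply_bcontfun (f::real\<Rightarrow>\<^sub>Creal) x\<bar> \<le> norm f"
  using norm_bounded[of f x] by simp

lemma per_shift:
  fixes g :: "real \<Rightarrow> real"
  assumes cg: "continuous_on UNIV g" and per: "\<And>x. g (x + 2*pi) = g x"
    and c: "0 \<le> c" "c \<le> 2*pi"
  shows "integral {-pi..pi} (\<lambda>x. g (x + c)) = integral {-pi..pi} g"
proof -
  have int: "\<And>a b. g integrable_on {a..b}"
    by (rule integrable_continuous_interval) (rule continuous_on_subset[OF cg], simp)
  have "integral {-pi..pi} (\<lambda>x. g (x + c)) = integral {-pi..pi} (g \<circ> (+) c)"
    by (simp add: o_def add.commute)
  also have "\<dots> = integral {-pi+c..pi+c} g" by (rule integral_shift_Icc_real)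
  also have "\<dots> = integral {-pi+c..pi} g + integral {pi..pi+c} g"
    by (rule Henstock_Kurzweil_Integration.integral_combine[symmetric]) (use c pi_gt_zero int in auto)
  also have "integral {pi..pi+c} g = integral {-pi+2*pi..-pi+c+2*pi} g" by simp
  also have "\<dots> = integral {-pi..-pi+c} (g \<circ> (+) (2*pi))"
    by (rule integral_shift_Icc_real[symmetric])
  also have "g \<circ> (+) (2*pi) = g" using per by (auto simp: add.commute)
  also have "integral {-pi+c..pi} g + integral {-pi..-pi+c} g = integral {-pi..pi} g"
    by (subst add.commute, rule Henstock_Kurzweil_Integration.integral_combine) (use c pi_gt_zero int in auto)
  finally show ?thesis .
qed

lemma dini:
  fixes F :: "real \<Rightarrow> real"
  assumes cF: "continuous_on {a..b} F" and ab: "a \<le> b"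
    and D: "\<And>t \<eta>. t \<in> {a..<b} \<Longrightarrow> \<eta> > 0 \<Longrightarrow> \<exists>d>0. \<forall>h. 0 < h \<and> h < d \<longrightarrow> F (t + h) \<le> F t + \<eta> * h"
  shows "F b \<le> F a"
proof -
  have key: "F b \<le> F a + \<eta> * (b - a)" if eta: "\<eta> > 0" for \<eta>
  proof -
    define S where "S = {s \<in> {a..b}. F s \<le> F a + \<eta> * (s - a)}"
    have clS: "closed S" unfolding S_def
      by (intro continuous_on_closed_Collect_le cF continuous_intros closed_atLeastAtMost)
    have aS: "a \<in> S" using ab by (simp add: S_def)
    have bdd: "bdd_above S" unfolding S_def by (auto intro: bdd_aboveI[of _ b])
    define c where "c = Sup S"
    have cS: "c \<in> S" unfolding c_def using clS aS bdd closed_contains_Sup by blast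
    have "c = b"
    proof (rule ccontr)
      assume "c \<noteq> b"
      with cS have cb: "c \<in> {a..<b}" by (auto simp: S_def)
      obtain d where d: "d > 0" "\<And>h. 0 < h \<and> h < d \<Longrightarrow> F (c + h) \<le> F c + \<eta> * h"
        using D[OF cb eta] by blast
      define h where "h = min (d/2) (b - c)"
      have h: "0 < h" "h < d" "c + h \<le> b" using d cb by (auto simp: h_def)
      have "F (c + h) \<le> F a + \<eta> * (c + h - a)"
        using d(2)[of h] h cS by (auto simp: S_def algebra_simps)
      hence "c + h \<in> S" using h cS by (auto simp: S_def)
      hence "c + h \<le> c" unfolding c_def using bdd by (rule cSup_upper)
      thus False using h by simp
    qed
    thus ?thesis using cS by (simp add: S_def)
  qed
  show ?thesis
  proof (rule field_le_epsilon)
    fix e :: real assume e: "e > 0"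
    show "F b \<le> F a + e"
    proof (cases "a = b")
      case True thus ?thesis using e by simp
    next
      case False
      hence "b - a > 0" using ab by simp
      with key[of "e / (b - a)"] e show ?thesis by simp
    qed
  qed
qed

lemma cont_eval[continuous_intros]:
  "continuous_on S g \<Longrightarrow> continuous_on S (\<lambda>x. apply_bcontfun (f::real\<Rightarrow>\<^sub>Creal) (g x))"
  by (rule continuous_on_compose2[OF continuous_on_apply_bcontfun[of UNIV f]]) auto

lemma int_cont: "continuous_on UNIV (f::real\<Rightarrow>real) \<Longrightarrow> f integrable_on {a..b}"
  by (rule integrable_continuous_interval) (erule continuous_on_subset, simp)

lemma mul_bound: "\<bar>p\<bar> \<le> S \<Longrightarrow> \<bar>q\<bar> \<le> M \<Longrightarrow> \<bar>p*q\<bar> \<le> S*(M::real)"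
  unfolding abs_mult by (rule mult_mono) auto

lemma abs3: "\<bar>a - b + c\<bar> \<le> \<bar>a\<bar> + \<bar>b\<bar> + \<bar>c::real\<bar>"
  by (rule order_trans[OF abs_triangle_ineq add_right_mono[OF abs_triangle_ineq4]])

lemma comb_ineq:
  fixes a b c w k p q :: real
  assumes "w \<ge> 0" "k \<ge> 0" "p \<ge> 0" "q \<ge> 0"
  shows "\<bar>a*w + k*(b*p + c*q)\<bar> \<le> \<bar>a\<bar>*w + k*(\<bar>b\<bar>*p + \<bar>c\<bar>*q)"
proof -
  have "\<bar>a*w + k*(b*p + c*q)\<bar> \<le> \<bar>a*w\<bar> + \<bar>k*(b*p + c*q)\<bar>" by (rule abs_triangle_ineq)
  also have "\<bar>a*w\<bar> = \<bar>a\<bar>*w" using assms by (simp add: abs_mult)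
  also have "\<bar>k*(b*p + c*q)\<bar> = k*\<bar>b*p + c*q\<bar>" using assms by (simp add: abs_mult)
  also have "\<bar>b*p + c*q\<bar> \<le> \<bar>b\<bar>*p + \<bar>c\<bar>*q"
    using abs_triangle_ineq[of "b*p" "c*q"] assms by (simp add: abs_mult)
  hence "k*\<bar>b*p + c*q\<bar> \<le> k*(\<bar>b\<bar>*p + \<bar>c\<bar>*q)" using assms by (simp add: mult_left_mono)
  finally show ?thesis by simp
qed

lemma phi_lip:
  fixes f g :: "real \<Rightarrow>\<^sub>C real"
  shows "integral {-pi..pi} (\<lambda>x. \<bar>f x\<bar>) \<le> integral {-pi..pi} (\<lambda>x. \<bar>g x\<bar>) + 2*pi * norm (f - g)"
proof -
  have "integral {-pi..pi} (\<lambda>x. \<bar>f x\<bar>) \<le> integral {-pi..pi} (\<lambda>x. \<bar>g x\<bar> + norm (f - g))"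
  proof (rule integral_le)
    show "(\<lambda>x. \<bar>f x\<bar>) integrable_on {-pi..pi}" by (intro int_cont continuous_intros)
    show "(\<lambda>x. \<bar>g x\<bar> + norm (f - g)) integrable_on {-pi..pi}" by (intro int_cont continuous_intros)
    fix x
    show "\<bar>f x\<bar> \<le> \<bar>g x\<bar> + norm (f - g)"
      using abs_eval_le[of "f - g" x] by simp
  qed
  also have "\<dots> = integral {-pi..pi} (\<lambda>x. \<bar>g x\<bar>) + 2*pi * norm (f - g)"
    by (subst integral_add) (auto intro!: int_cont continuous_intros)
  finally show ?thesis .
qed

lemma phi_cont: "continuous_on UNIV (\<lambda>f::real\<Rightarrow>\<^sub>Creal. integral {-pi..pi} (\<lambda>x. \<bar>f x\<bar>))"
proof (rule lipschitz_on_continuous_on[of "2*pi"], rule lipschitz_onI)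
  fix f g :: "real\<Rightarrow>\<^sub>Creal"
  show "dist (integral {-pi..pi} (\<lambda>x. \<bar>f x\<bar>)) (integral {-pi..pi} (\<lambda>x. \<bar>g x\<bar>)) \<le> 2*pi * dist f g"
    using phi_lip[of f g] phi_lip[of g f] by (simp add: dist_real_def dist_norm norm_minus_commute)
qed simp

theorem lemma1:
  fixes u :: "real \<Rightarrow> real \<Rightarrow> (real \<Rightarrow>\<^sub>C real)"
    and v0 :: "real \<Rightarrow> (real \<Rightarrow>\<^sub>C real)"
    and X :: "real \<Rightarrow> real \<Rightarrow> (real \<Rightarrow>\<^sub>C real)"
    and M1 :: real
  assumes u_per: "\<And>\<epsilon> t x. 0 < \<epsilon> \<Longrightarrow> \<epsilon> < 1 \<Longrightarrow> 0 \<le> t \<Longrightarrow>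
      apply_bcontfun (u \<epsilon> t) (x + 2 * pi) = apply_bcontfun (u \<epsilon> t) x"
    and u_cont: "\<And>\<epsilon>. 0 < \<epsilon> \<Longrightarrow> \<epsilon> < 1 \<Longrightarrow> continuous_on {0..} (u \<epsilon>)"
    and M1_pos: "M1 > 0"
    and u_bound: "\<And>\<epsilon> t x. 0 < \<epsilon> \<Longrightarrow> \<epsilon> < 1 \<Longrightarrow> 0 \<le> t \<Longrightarrow>
      \<bar>apply_bcontfun (u \<epsilon> t) x\<bar> \<le> M1"
    and v0_per: "\<And>\<epsilon> x. 0 < \<epsilon> \<Longrightarrow> \<epsilon> < 1 \<Longrightarrow>
      apply_bcontfun (v0 \<epsilon>) (x + 2 * pi) = apply_bcontfun (v0 \<epsilon>) x"
    and v0_L1: "bdd_above ((\<lambda>\<epsilon>. integral {-pi..pi} (\<lambda>x. \<bar>apply_bcontfun (v0 \<epsilon>) x\<bar>)) ` {0<..<1})"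
    and X_init: "\<And>\<epsilon>. 0 < \<epsilon> \<Longrightarrow> \<epsilon> < 1 \<Longrightarrow> X \<epsilon> 0 = v0 \<epsilon>"
    and X_ode: "\<And>\<epsilon>. 0 < \<epsilon> \<Longrightarrow> \<epsilon> < 1 \<Longrightarrow>
      \<exists>X' :: real \<Rightarrow> (real \<Rightarrow>\<^sub>C real).
        continuous_on {0..} X' \<and>
        (\<forall>t\<ge>0. (X \<epsilon> has_vector_derivative X' t) (at t within {0..})) \<and>
        (\<forall>t\<ge>0. \<forall>x. apply_bcontfun (X' t) x =
           (1 / \<epsilon>) * (apply_bcontfun (X \<epsilon> t) (x - \<epsilon>) * max 0 (apply_bcontfun (u \<epsilon> t) (x - \<epsilon>))
             - apply_bcontfun (X \<epsilon> t) x * \<bar>apply_bcontfun (u \<epsilon> t) x\<bar>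
             + apply_bcontfun (X \<epsilon> t) (x + \<epsilon>) * max 0 (- apply_bcontfun (u \<epsilon> t) (x + \<epsilon>))))"
  shows "\<exists>C > 0. \<forall>\<epsilon> \<in> {0<..<1}. \<forall>t \<ge> 0.
      integral {-pi..pi} (\<lambda>x. \<bar>apply_bcontfun (X \<epsilon> t) x\<bar>)
        \<le> integral {-pi..pi} (\<lambda>x. \<bar>apply_bcontfun (v0 \<epsilon>) x\<bar>) \<and>
      integral {-pi..pi} (\<lambda>x. \<bar>apply_bcontfun (v0 \<epsilon>) x\<bar>) \<le> C"
proof -
  have main: "integral {-pi..pi} (\<lambda>x. \<bar>apply_bcontfun (X \<epsilon> t) x\<bar>)
        \<le> integral {-pi..pi} (\<lambda>x. \<bar>apply_bcontfun (v0 \<epsilon>) x\<bar>)"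
    if e: "0 < \<epsilon>" "\<epsilon> < 1" and t: "0 \<le> t" for \<epsilon> t
  proof -
    obtain X' where Xd: "\<And>t. t \<ge> 0 \<Longrightarrow> (X \<epsilon> has_vector_derivative X' t) (at t within {0..})"
      and X'f: "\<And>t x. t \<ge> 0 \<Longrightarrow> apply_bcontfun (X' t) x =
           (1 / \<epsilon>) * (apply_bcontfun (X \<epsilon> t) (x - \<epsilon>) * max 0 (apply_bcontfun (u \<epsilon> t) (x - \<epsilon>))
             - apply_bcontfun (X \<epsilon> t) x * \<bar>apply_bcontfun (u \<epsilon> t) x\<bar>
             + apply_bcontfun (X \<epsilon> t) (x + \<epsilon>) * max 0 (- apply_bcontfun (u \<epsilon> t) (x + \<epsilon>)))"
      using X_ode[OF e] by blast
    have Xc: "continuous_on {0..} (X \<epsilon>)" using Xd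
      by (auto intro: has_vector_derivative_continuous simp: continuous_on_eq_continuous_within)
    define D where "D s x = apply_bcontfun (X \<epsilon> s) (x + 2*pi) - apply_bcontfun (X \<epsilon> s) x" for s x
    define Dp where "Dp s x = (1/\<epsilon>) * (D s (x-\<epsilon>) * max 0 (apply_bcontfun (u \<epsilon> s) (x-\<epsilon>))
        - D s x * \<bar>apply_bcontfun (u \<epsilon> s) x\<bar> + D s (x+\<epsilon>) * max 0 (- apply_bcontfun (u \<epsilon> s) (x+\<epsilon>)))" for s x
    have Dd: "((\<lambda>s. D s x) has_real_derivative Dp s x) (at s within {0..})" if s: "s \<ge> 0" for s x
    proof -
      have "((\<lambda>s. D s x) has_real_derivative apply_bcontfun (X' s) (x+2*pi) - apply_bcontfun (X' s) x) (at s within {0..})"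
        unfolding D_def by (intro DERIV_diff eval_deriv Xd s)
      moreover have "apply_bcontfun (X' s) (x+2*pi) - apply_bcontfun (X' s) x = Dp s x"
      proof -
        have u1: "apply_bcontfun (u \<epsilon> s) (x + 2*pi - \<epsilon>) = apply_bcontfun (u \<epsilon> s) (x - \<epsilon>)"
          using u_per[OF e s, of "x-\<epsilon>"] by (simp add: algebra_simps)
        have u2: "apply_bcontfun (u \<epsilon> s) (x + 2*pi + \<epsilon>) = apply_bcontfun (u \<epsilon> s) (x + \<epsilon>)"
          using u_per[OF e s, of "x+\<epsilon>"] by (simp add: algebra_simps)
        have u3: "apply_bcontfun (u \<epsilon> s) (x + 2*pi) = apply_bcontfun (u \<epsilon> s) x"
          using u_per[OF e s] .
        have x1: "x + 2*pi - \<epsilon> = (x - \<epsilon>) + 2*pi" "x + 2*pi + \<epsilon> = (x+\<epsilon>) + 2*pi" by simp_all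
        show ?thesis unfolding X'f[OF s] u1 u2 u3 unfolding x1 Dp_def D_def by (simp add: algebra_simps)
      qed
      ultimately show ?thesis by simp
    qed
    define h0 where "h0 = \<epsilon> / (6*M1)"
    have h0: "h0 > 0" using e M1_pos by (simp add: h0_def)
    have step: "\<forall>s\<in>{a..a+h0}. \<forall>x. D s x = 0" if a: "a \<ge> 0" and Da: "\<forall>x. D a x = 0" for a
    proof -
      have "compact (X \<epsilon> ` {a..a+h0})"
        by (intro compact_continuous_image continuous_on_subset[OF Xc]) (use a in auto)
      then obtain B where B: "\<And>s. s \<in> {a..a+h0} \<Longrightarrow> norm (X \<epsilon> s) \<le> B"
        using compact_imp_bounded bounded_iff by (metis image_eqI)
      define T where "T = {\<bar>D s x\<bar> | s x. s \<in> {a..a+h0}}"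
      have Dle: "\<bar>D s x\<bar> \<le> 2*B" if "s \<in> {a..a+h0}" for s x
        using abs_eval_le[of "X \<epsilon> s" "x+2*pi"] abs_eval_le[of "X \<epsilon> s" x] B[OF that]
        unfolding D_def by linarith
      have bddT: "bdd_above T" unfolding T_def using Dle by (auto intro!: bdd_aboveI[of _ "2*B"])
      have "\<bar>D a 0\<bar> \<in> T" unfolding T_def
      proof -
        have "a \<in> {a..a+h0}" using h0 by simp
        thus "\<bar>D a 0\<bar> \<in> {\<bar>D s x\<bar> |s x. s \<in> {a..a + h0}}" by blast
      qed
      hence neT: "T \<noteq> {}" by auto
      define S where "S = Sup T"
      have DS: "\<bar>D s x\<bar> \<le> S" if "s \<in> {a..a+h0}" for s x
        unfolding S_def by (rule cSup_upper[OF _ bddT]) (use that in \<open>auto simp: T_def\<close>)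
      have S0: "S \<ge> 0" using DS[of a 0] h0 by auto
      have Dpb: "\<bar>Dp z y\<bar> \<le> 3*M1*S/\<epsilon>" if z: "z \<in> {a..a+h0}" for z y
      proof -
        have z0: "z \<ge> 0" using z a by auto
        have m1: "\<bar>max 0 (apply_bcontfun (u \<epsilon> z) (y-\<epsilon>))\<bar> \<le> M1"
          using u_bound[OF e z0, of "y-\<epsilon>"] by linarith
        have m2: "\<bar>max 0 (- apply_bcontfun (u \<epsilon> z) (y+\<epsilon>))\<bar> \<le> M1"
          using u_bound[OF e z0, of "y+\<epsilon>"] by linarith
        have m3: "\<bar>\<bar>apply_bcontfun (u \<epsilon> z) y\<bar>\<bar> \<le> M1"
          using u_bound[OF e z0, of "y"] by simp
        have t1: "\<bar>D z (y-\<epsilon>) * max 0 (apply_bcontfun (u \<epsilon> z) (y-\<epsilon>))\<bar> \<le> S*M1"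
          by (rule mul_bound[OF DS[OF z] m1])
        have t2: "\<bar>D z y * \<bar>apply_bcontfun (u \<epsilon> z) y\<bar>\<bar> \<le> S*M1"
          by (rule mul_bound[OF DS[OF z] m3])
        have t3: "\<bar>D z (y+\<epsilon>) * max 0 (- apply_bcontfun (u \<epsilon> z) (y+\<epsilon>))\<bar> \<le> S*M1"
          by (rule mul_bound[OF DS[OF z] m2])
        have "\<bar>D z (y-\<epsilon>) * max 0 (apply_bcontfun (u \<epsilon> z) (y-\<epsilon>))
            - D z y * \<bar>apply_bcontfun (u \<epsilon> z) y\<bar> + D z (y+\<epsilon>) * max 0 (- apply_bcontfun (u \<epsilon> z) (y+\<epsilon>))\<bar>
            \<le> 3*(S*M1)" (is "\<bar>?W\<bar> \<le> _") by (rule order_trans[OF abs3]) (use t1 t2 t3 in linarith)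
        hence "\<bar>?W\<bar> / \<epsilon> \<le> 3*(S*M1) / \<epsilon>" by (rule divide_right_mono) (use e in simp)
        thus ?thesis unfolding Dp_def using e by (simp add: abs_mult mult_ac)
      qed
      have half: "\<bar>D s x\<bar> \<le> S/2" if s: "s \<in> {a..a+h0}" for s x
      proof -
        have "norm (D s x - D a x) \<le> (3*M1*S/\<epsilon>) * norm (s - a)"
        proof (rule field_differentiable_bound[of "{a..a+h0}" "\<lambda>s. D s x" "\<lambda>z. Dp z x"])
          fix z assume z: "z \<in> {a..a+h0}"
          show "((\<lambda>s. D s x) has_field_derivative Dp z x) (at z within {a..a+h0})"
            by (rule has_field_derivative_subset[OF Dd]) (use z a in auto)
          show "norm (Dp z x) \<le> 3*M1*S/\<epsilon>" using Dpb[OF z] by simp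
        qed (use s h0 in auto)
        hence "\<bar>D s x\<bar> \<le> (3*M1*S/\<epsilon>) * (s - a)" using Da s by simp
        also have "\<dots> \<le> (3*M1*S/\<epsilon>) * h0"
          using s S0 M1_pos e by (intro mult_left_mono) auto
        also have "\<dots> = S/2" using e M1_pos by (simp add: h0_def field_simps)
        finally show ?thesis .
      qed
      have "S \<le> S/2" unfolding S_def
        by (rule cSup_least[OF neT]) (use half in \<open>auto simp: T_def S_def\<close>)
      hence "S = 0" using S0 by simp
      thus ?thesis using DS by fastforce
    qed
    have D0: "D 0 x = 0" for x using v0_per[OF e] X_init[OF e] by (simp add: D_def)
    have ind: "\<forall>s\<in>{0..real n * h0}. \<forall>x. D s x = 0" for n
    proof (induction n)
      case 0 then show ?case using D0 by simp
    next
      case (Suc n)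
      have "\<forall>x. D (real n * h0) x = 0" using Suc h0 by auto
      from step[OF _ this] have st: "\<forall>s\<in>{real n*h0..real n*h0+h0}. \<forall>x. D s x = 0" using h0 by simp
      show ?case
      proof (intro ballI allI)
        fix s x assume s: "s \<in> {0..real (Suc n) * h0}"
        show "D s x = 0"
        proof (cases "s \<le> real n * h0")
          case True thus ?thesis using Suc s by auto
        next
          case False thus ?thesis using st s by (auto simp: algebra_simps)
        qed
      qed
    qed
    have Xper: "apply_bcontfun (X \<epsilon> s) (x + 2*pi) = apply_bcontfun (X \<epsilon> s) x" if s: "s \<ge> 0" for s x
    proof -
      obtain n where "s / h0 < real n" using reals_Archimedean2 by blast
      hence "s \<le> real n * h0" using h0 by (simp add: pos_divide_less_eq)
      thus ?thesis using ind[of n] s unfolding D_def by auto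
    qed
    define N where "N s = integral {-pi..pi} (\<lambda>x. \<bar>apply_bcontfun (X \<epsilon> s) x\<bar>)" for s
    have key: "integral {-pi..pi} (\<lambda>x. \<bar>apply_bcontfun (X \<epsilon> t) x + h * apply_bcontfun (X' t) x\<bar>) \<le> N t"
      if t: "t \<ge> 0" and h: "0 < h" "h * M1 \<le> \<epsilon>" for t h
    proof -
      define A where "A = apply_bcontfun (X \<epsilon> t)"
      define U where "U = apply_bcontfun (u \<epsilon> t)"
      define g1 where "g1 y = \<bar>A y\<bar> * max 0 (U y)" for y
      define g2 where "g2 y = \<bar>A y\<bar> * max 0 (- U y)" for y
      define k where "k = h / \<epsilon>"
      have k0: "k \<ge> 0" using h e by (simp add: k_def)
      have cg1: "continuous_on UNIV g1" unfolding g1_def A_def U_def by (intro continuous_intros)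
      have cg2: "continuous_on UNIV g2" unfolding g2_def A_def U_def by (intro continuous_intros)
      have Aper: "A (y + 2*pi) = A y" for y unfolding A_def by (rule Xper[OF t])
      have Uper: "U (y + 2*pi) = U y" for y unfolding U_def by (rule u_per[OF e t])
      have g1per: "g1 (y + 2*pi) = g1 y" for y unfolding g1_def Aper Uper ..
      have g2per: "g2 (y + 2*pi) = g2 y" for y unfolding g2_def Aper Uper ..
      have pw: "\<bar>A x + h * apply_bcontfun (X' t) x\<bar> \<le> \<bar>A x\<bar> + k * (g1 (x - \<epsilon>) - g1 x) + k * (g2 (x + \<epsilon>) - g2 x)" for x
      proof -
        have Ux: "\<bar>U x\<bar> \<le> M1" unfolding U_def by (rule u_bound[OF e t])
        have "k * \<bar>U x\<bar> \<le> k * M1" using Ux k0 by (rule mult_left_mono)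
        also have "k * M1 \<le> 1" using h e by (simp add: k_def field_simps)
        finally have w0: "1 - k * \<bar>U x\<bar> \<ge> 0" by simp
        have eq: "A x + h * apply_bcontfun (X' t) x = A x * (1 - k * \<bar>U x\<bar>) + k * (A (x - \<epsilon>) * max 0 (U (x - \<epsilon>)) + A (x + \<epsilon>) * max 0 (- U (x + \<epsilon>)))"
          unfolding X'f[OF t] A_def U_def k_def using e by (simp add: field_simps)
        have "\<bar>A x + h * apply_bcontfun (X' t) x\<bar> \<le> \<bar>A x\<bar> * (1 - k * \<bar>U x\<bar>) + k * (\<bar>A (x - \<epsilon>)\<bar> * max 0 (U (x - \<epsilon>)) + \<bar>A (x + \<epsilon>)\<bar> * max 0 (- U (x + \<epsilon>)))"
          unfolding eq by (rule comb_ineq[OF w0 k0]) auto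
        also have "\<dots> = \<bar>A x\<bar> + k * (g1 (x - \<epsilon>) - g1 x) + k * (g2 (x + \<epsilon>) - g2 x)"
          unfolding g1_def g2_def by (simp add: algebra_simps abs_real_def max_def)
        finally show ?thesis .
      qed
      have sh1: "integral {-pi..pi} (\<lambda>x. g1 (x - \<epsilon>)) = integral {-pi..pi} g1"
      proof -
        have "integral {-pi..pi} (\<lambda>x. g1 (x - \<epsilon>)) = integral {-pi..pi} (\<lambda>x. g1 (x + (2*pi - \<epsilon>)))"
          using g1per[of "_ - \<epsilon>"] by (simp add: algebra_simps)
        also have "\<dots> = integral {-pi..pi} g1"
          using e pi_gt3 by (intro per_shift cg1 g1per) auto
        finally show ?thesis .
      qed
      have sh2: "integral {-pi..pi} (\<lambda>x. g2 (x + \<epsilon>)) = integral {-pi..pi} g2"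
        using e pi_gt3 by (intro per_shift cg2 g2per) auto
      have cA: "continuous_on UNIV (\<lambda>x. \<bar>A x\<bar>)" unfolding A_def by (intro continuous_intros)
      have cg1s: "continuous_on UNIV (\<lambda>x. g1 (x - \<epsilon>))"
        by (rule continuous_on_compose2[OF cg1]) (auto intro!: continuous_intros)
      have cg2s: "continuous_on UNIV (\<lambda>x. g2 (x + \<epsilon>))"
        by (rule continuous_on_compose2[OF cg2]) (auto intro!: continuous_intros)
      have "integral {-pi..pi} (\<lambda>x. \<bar>A x + h * apply_bcontfun (X' t) x\<bar>)
          \<le> integral {-pi..pi} (\<lambda>x. \<bar>A x\<bar> + k * (g1 (x - \<epsilon>) - g1 x) + k * (g2 (x + \<epsilon>) - g2 x))"
        by (rule integral_le[OF _ _ pw]) (unfold A_def, auto intro!: int_cont continuous_intros cg1 cg2 cg1s cg2s)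
      also have "\<dots> = integral {-pi..pi} (\<lambda>x. \<bar>A x\<bar>) + k * (integral {-pi..pi} (\<lambda>x. g1 (x - \<epsilon>)) - integral {-pi..pi} g1)
           + k * (integral {-pi..pi} (\<lambda>x. g2 (x + \<epsilon>)) - integral {-pi..pi} g2)"
      proof -
        have iA: "(\<lambda>x. \<bar>A x\<bar>) integrable_on {-pi..pi}" by (rule int_cont[OF cA])
        have i1: "(\<lambda>x. g1 (x - \<epsilon>) - g1 x) integrable_on {-pi..pi}"
          by (rule integrable_diff[OF int_cont[OF cg1s] int_cont[OF cg1]])
        have i2: "(\<lambda>x. g2 (x + \<epsilon>) - g2 x) integrable_on {-pi..pi}"
          by (rule integrable_diff[OF int_cont[OF cg2s] int_cont[OF cg2]])
        have i1k: "(\<lambda>x. k * (g1 (x - \<epsilon>) - g1 x)) integrable_on {-pi..pi}"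
          using integrable_on_cmult_left[OF i1, of k] by simp
        have i2k: "(\<lambda>x. k * (g2 (x + \<epsilon>) - g2 x)) integrable_on {-pi..pi}"
          using integrable_on_cmult_left[OF i2, of k] by simp
        have "integral {-pi..pi} (\<lambda>x. \<bar>A x\<bar> + k * (g1 (x - \<epsilon>) - g1 x) + k * (g2 (x + \<epsilon>) - g2 x))
          = integral {-pi..pi} (\<lambda>x. \<bar>A x\<bar> + k * (g1 (x - \<epsilon>) - g1 x)) + integral {-pi..pi} (\<lambda>x. k * (g2 (x + \<epsilon>) - g2 x))"
          by (rule integral_add[OF integrable_add[OF iA i1k] i2k])
        also have "integral {-pi..pi} (\<lambda>x. \<bar>A x\<bar> + k * (g1 (x - \<epsilon>) - g1 x))
          = integral {-pi..pi} (\<lambda>x. \<bar>A x\<bar>) + integral {-pi..pi} (\<lambda>x. k * (g1 (x - \<epsilon>) - g1 x))"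
          by (rule integral_add[OF iA i1k])
        also have "integral {-pi..pi} (\<lambda>x. k * (g1 (x - \<epsilon>) - g1 x)) = k * integral {-pi..pi} (\<lambda>x. g1 (x - \<epsilon>) - g1 x)"
          by (rule integral_mult_right)
        also have "integral {-pi..pi} (\<lambda>x. k * (g2 (x + \<epsilon>) - g2 x)) = k * integral {-pi..pi} (\<lambda>x. g2 (x + \<epsilon>) - g2 x)"
          by (rule integral_mult_right)
        also have "integral {-pi..pi} (\<lambda>x. g1 (x - \<epsilon>) - g1 x) = integral {-pi..pi} (\<lambda>x. g1 (x - \<epsilon>)) - integral {-pi..pi} g1"
          by (rule integral_diff[OF int_cont[OF cg1s] int_cont[OF cg1]])
        also have "integral {-pi..pi} (\<lambda>x. g2 (x + \<epsilon>) - g2 x) = integral {-pi..pi} (\<lambda>x. g2 (x + \<epsilon>)) - integral {-pi..pi} g2"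
          by (rule integral_diff[OF int_cont[OF cg2s] int_cont[OF cg2]])
        finally show ?thesis .
      qed
      also have "\<dots> = N t" unfolding sh1 sh2 N_def A_def by simp
      finally show ?thesis unfolding A_def .
    qed
    have Ne: "N (t + h) \<le> N t + 2*pi * norm (X \<epsilon> (t+h) - X \<epsilon> t - h *\<^sub>R X' t)"
      if t: "t \<ge> 0" and h: "0 < h" "h * M1 \<le> \<epsilon>" for t h
    proof -
      let ?R = "norm (X \<epsilon> (t+h) - X \<epsilon> t - h *\<^sub>R X' t)"
      have "N (t + h) \<le> integral {-pi..pi} (\<lambda>x. \<bar>apply_bcontfun (X \<epsilon> t) x + h * apply_bcontfun (X' t) x\<bar> + ?R)"
        unfolding N_def
      proof (rule integral_le)
        fix x
        show "\<bar>apply_bcontfun (X \<epsilon> (t+h)) x\<bar> \<le> \<bar>apply_bcontfun (X \<epsilon> t) x + h * apply_bcontfun (X' t) x\<bar> + ?R"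
          using abs_eval_le[of "X \<epsilon> (t+h) - X \<epsilon> t - h *\<^sub>R X' t" x] by simp
      qed (auto intro!: int_cont continuous_intros)
      also have "\<dots> = integral {-pi..pi} (\<lambda>x. \<bar>apply_bcontfun (X \<epsilon> t) x + h * apply_bcontfun (X' t) x\<bar>) + 2*pi*?R"
        by (subst integral_add) (auto intro!: int_cont continuous_intros)
      also have "\<dots> \<le> N t + 2*pi*?R" using key[OF t h] by simp
      finally show ?thesis .
    qed
    have cN: "continuous_on {0..t} N"
      unfolding N_def by (rule continuous_on_compose2[OF phi_cont continuous_on_subset[OF Xc]]) auto
    have "N t \<le> N 0"
    proof (rule dini[OF cN t])
      fix s \<eta> :: real assume s: "s \<in> {0..<t}" and eta: "\<eta> > 0"
      hence s0: "s \<ge> 0" by simp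
      have "\<forall>e>0. \<exists>d>0. \<forall>y\<in>{0..}. norm (y - s) < d \<longrightarrow> norm (X \<epsilon> y - X \<epsilon> s - (y - s) *\<^sub>R X' s) \<le> e * norm (y - s)"
        using Xd[OF s0] unfolding has_vector_derivative_def has_derivative_within_alt by blast
      then obtain d where d: "d > 0" and dd: "\<And>y. y \<in> {0..} \<Longrightarrow> norm (y - s) < d \<Longrightarrow>
          norm (X \<epsilon> y - X \<epsilon> s - (y - s) *\<^sub>R X' s) \<le> \<eta> / (2*pi) * norm (y - s)"
        using eta by (metis divide_pos_pos pi_gt_zero zero_less_mult_iff zero_less_numeral)
      show "\<exists>d>0. \<forall>h. 0 < h \<and> h < d \<longrightarrow> N (s + h) \<le> N s + \<eta> * h"
      proof (intro exI[of _ "min d (\<epsilon> / M1)"] conjI allI impI)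
        show "min d (\<epsilon> / M1) > 0" using d e M1_pos by simp
        fix h assume h: "0 < h \<and> h < min d (\<epsilon> / M1)"
        have hM: "h * M1 \<le> \<epsilon>" using h M1_pos by (simp add: less_divide_eq less_imp_le)
        have "N (s + h) \<le> N s + 2*pi * norm (X \<epsilon> (s+h) - X \<epsilon> s - h *\<^sub>R X' s)"
          using Ne[OF s0 _ hM] h by simp
        also have "norm (X \<epsilon> (s+h) - X \<epsilon> s - h *\<^sub>R X' s) \<le> \<eta> / (2*pi) * h"
          using dd[of "s+h"] h s0 by simp
        finally show "N (s + h) \<le> N s + \<eta> * h" by (simp add: mult_left_mono)
      qed
    qed
    thus ?thesis unfolding N_def using X_init[OF e] by simp
  qed
  obtain M where M: "\<forall>y\<in>(\<lambda>\<epsilon>. integral {-pi..pi} (\<lambda>x. \<bar>apply_bcontfun (v0 \<epsilon>) x\<bar>)) ` {0<..<1}. y \<le> M"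
    using v0_L1 unfolding bdd_above_def by blast
  have Bd: "integral {-pi..pi} (\<lambda>x. \<bar>apply_bcontfun (v0 \<epsilon>) x\<bar>) \<le> M" if "\<epsilon> \<in> {0<..<1}" for \<epsilon>
    using M that by blast
  show ?thesis
  proof (intro exI[of _ "max 1 M"] conjI ballI allI impI)
    show "max 1 M > 0" by simp
    fix \<epsilon> t :: real assume e: "\<epsilon> \<in> {0<..<1}" and t: "0 \<le> t"
    show "integral {-pi..pi} (\<lambda>x. \<bar>apply_bcontfun (X \<epsilon> t) x\<bar>)
        \<le> integral {-pi..pi} (\<lambda>x. \<bar>apply_bcontfun (v0 \<epsilon>) x\<bar>)" using main e t by simp
    show "integral {-pi..pi} (\<lambda>x. \<bar>apply_bcontfun (v0 \<epsilon>) x\<bar>) \<le> max 1 M" using Bd[OF e] by linarith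
  qed
qed

end
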